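(* The equation $x^4+9x^2y^2+27y^4=z^2$ has no solution $(x,y,z)\in\mathbb{Z}^3$ with $x,y,z$ all nonzero. *)

theory Defs
  imports Main
begin

end

theory Submission imports Defs "HOL-Computational_Algebra.Primes" "HOL-Computational_Algebra.Nth_Powers" begin

lemma prime3_int: "prime (3::int)" by simp
lemma prime3_nat: "prime (3::nat)" by simp

lemma coprime_by_primes:
  fixes a b :: int
  assumes "\<And>p. prime p \<Longrightarrow> p dvd a \<Longrightarrow> p dvd b \<Longrightarrow> False"
  shows "coprime a b"
proof (rule ccontr)
  assume "\<not> coprime a b"
  then have "gcd a b \<noteq> 1" by (simp add: coprime_iff_gcd_eq_1)
  then have "\<bar>gcd a b\<bar> \<noteq> 1" by simp
  then obtain p where "prime p" "p dvd gcd a b" by (rule prime_factor_int)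
  then show False using assms by auto
qed

lemma prime_dvd_3:
  fixes p :: int
  assumes "prime p" "p dvd 27"
  shows "p = 3"
proof -
  have "p dvd 3^3" using assms by simp
  then have "p dvd 3" using assms prime_dvd_power by blast
  moreover have "p > 1" using assms prime_gt_1_int by blast
  ultimately have "p \<le> 3" using zdvd_imp_le by simp
  moreover have "p \<noteq> 2" using \<open>p dvd 3\<close> by auto
  ultimately show ?thesis using \<open>p > 1\<close> by simp
qed

lemma sq_mod3:
  fixes x :: int
  shows "x^2 mod 3 = (if 3 dvd x then 0 else 1)"
proof -
  define q where "q = x div 3"
  define r where "r = x mod 3"
  have x: "x = 3*q + r" unfolding q_def r_def by simp
  have r: "r = 0 \<or> r = 1 \<or> r = 2" unfolding r_def by auto
  have x2: "x^2 = 3*(3*q^2 + 2*q*r) + r^2" unfolding x by (simp add: power2_eq_square algebra_simps)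
  have e: "x^2 mod 3 = r^2 mod 3" unfolding x2 by (rule mod_mult_self4)
  have d: "3 dvd x \<longleftrightarrow> r = 0" unfolding r_def by (simp add: dvd_eq_mod_eq_0)
  from r show ?thesis
  proof (elim disjE)
    assume "r = 0" then show ?thesis using e d by simp
  next
    assume "r = 1" then show ?thesis using e d by simp
  next
    assume h: "r = 2"
    then have "r^2 mod 3 = 1" by simp
    then show ?thesis using e d h by simp
  qed
qed

lemma mod3_lemma:
  fixes x b :: int
  assumes "3 dvd x^2 + b^4"
  shows "3 dvd x"
proof (rule ccontr)
  assume nx: "\<not> 3 dvd x"
  have x2: "x^2 mod 3 = 1" using nx sq_mod3[of x] by simp
  have b4: "b^4 = (b^2)^2" by simp
  have "(b^2)^2 mod 3 = (if 3 dvd b^2 then 0 else 1)" by (rule sq_mod3)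
  then have b4m: "b^4 mod 3 = 0 \<or> b^4 mod 3 = 1" unfolding b4 by presburger
  have e: "(x^2 + b^4) mod 3 = (x^2 mod 3 + b^4 mod 3) mod 3" by (rule mod_add_eq[symmetric])
  have z: "(x^2 + b^4) mod 3 = 0" using assms by simp
  from b4m show False
  proof
    assume "b^4 mod 3 = 0" then show False using e z x2 by simp
  next
    assume "b^4 mod 3 = 1" then show False using e z x2 by simp
  qed
qed

lemma L_nat:
  fixes D E t :: nat
  assumes "coprime D E" "D*E = 27*t^4" "\<not> 3 dvd D" "D > 0" "E > 0"
  shows "\<exists>a b. D = a^4 \<and> E = 27*b^4"
proof -
  have "coprime (3::nat) D" using assms(3) prime_imp_coprime[OF prime3_nat] by blast
  then have "coprime ((3::nat)^3) D" by (subst coprime_power_left_iff) simp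
  moreover have "(3::nat)^3 = 27" by simp
  ultimately have c27: "coprime (27::nat) D" by simp
  have "27 dvd D * E" using assms(2) by simp
  then have "27 dvd E" using c27 by (simp add: coprime_dvd_mult_right_iff)
  then obtain F where F: "E = 27*F" by blast
  have DF: "D * F = t^4" using assms(2) F by simp
  have cDF: "coprime D F" using assms(1) F by simp
  have "F > 0" using F assms by simp
  have "is_nth_power 4 (D*F)" using DF by auto
  then have "is_nth_power 4 D" "is_nth_power 4 F"
    using is_nth_power_mult_coprime_natD[OF cDF] assms \<open>F>0\<close> by auto
  then show ?thesis using F by (auto elim!: is_nth_powerE)
qed

lemma L_int:
  fixes D E t :: int
  assumes "coprime D E" "D*E = 27*t^4" "D>0" "E>0"
  shows "\<exists>a b. (D = a^4 \<and> E = 27*b^4) \<or> (D = 27*a^4 \<and> E = b^4)"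
proof -
  define D0 where "D0 = nat D"
  define E0 where "E0 = nat E"
  define t0 where "t0 = nat \<bar>t\<bar>"
  have D: "D = int D0" and E: "E = int E0" using assms by (simp_all add: D0_def E0_def)
  have "int t0 = \<bar>t\<bar>" unfolding t0_def by simp
  then have t4: "t^4 = int (t0^4)" by simp
  have "int (D0*E0) = int (27*t0^4)" using assms(2) D E t4 by simp
  then have eq: "D0*E0 = 27*t0^4" by (simp only: of_nat_eq_iff)
  have cop: "coprime D0 E0" using assms(1) D E by simp
  have D0p: "D0 > 0" and E0p: "E0 > 0" using assms D E by auto
  have "\<not> 3 dvd D0 \<or> \<not> 3 dvd E0"
    using coprime_common_divisor[OF cop, of 3] by auto
  then show ?thesis
  proof
    assume "\<not> 3 dvd D0"
    then obtain a b where "D0 = a^4" "E0 = 27*b^4" using L_nat[OF cop eq _ D0p E0p] by blast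
    then show ?thesis using D E by (intro exI[of _ "int a"] exI[of _ "int b"]) simp
  next
    assume "\<not> 3 dvd E0"
    moreover have "E0 * D0 = 27*t0^4" using eq by (simp add: mult.commute)
    moreover have "coprime E0 D0" using cop by (simp add: coprime_commute)
    ultimately obtain a b where "E0 = a^4" "D0 = 27*b^4" using L_nat[of E0 D0 t0] D0p E0p by blast
    then show ?thesis using D E by (intro exI[of _ "int b"] exI[of _ "int a"]) simp
  qed
qed

lemma three_not_dvd_x:
  fixes x y z :: int
  assumes cop: "coprime x y" and eq: "z^2 = x^4 + 9*x^2*y^2 + 27*y^4"
  shows "\<not> 3 dvd x"
proof
  assume "3 dvd x"
  then obtain x1 where x1: "x = 3*x1" by blast
  have "z^2 = 3*(27*x1^4 + 27*x1^2*y^2 + 9*y^4)" using eq x1 by (simp add: power_mult_distrib)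
  then have "3 dvd z^2" by simp
  then have "3 dvd z" by (rule prime_dvd_power[OF prime3_int])
  then obtain z1 where z1: "z = 3*z1" by blast
  have "9*z1^2 = 9*(9*x1^4 + 9*x1^2*y^2 + 3*y^4)" using eq x1 z1 by (simp add: power_mult_distrib)
  then have "z1^2 = 3*(3*x1^4 + 3*x1^2*y^2 + y^4)" by simp
  then have "3 dvd z1^2" by simp
  then have "3 dvd z1" by (rule prime_dvd_power[OF prime3_int])
  then obtain z2 where z2: "z1 = 3*z2" by blast
  have "9*z2^2 = 3*(3*x1^4 + 3*x1^2*y^2 + y^4)" using \<open>z1^2 = _\<close> z2 by (simp add: power_mult_distrib)
  then have "y^4 = 3*(z2^2 - x1^4 - x1^2*y^2)" by simp
  then have "3 dvd y^4" by simp
  then have "3 dvd y" by (rule prime_dvd_power[OF prime3_int])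
  then show False using coprime_common_divisor[OF cop \<open>3 dvd x\<close>] by simp
qed

lemma z_odd:
  fixes x y z :: int
  assumes cop: "coprime x y" and eq: "z^2 = x^4 + 9*x^2*y^2 + 27*y^4"
  shows "odd z"
proof -
  have "\<not> (even x \<and> even y)" using coprime_common_divisor[OF cop, of 2] by auto
  then have "odd (x^4 + 9*x^2*y^2 + 27*y^4)" by auto
  then have "odd (z^2)" using eq by simp
  then show ?thesis by simp
qed

lemma step1:
  fixes x y z :: int
  assumes cop: "coprime x y" and x0: "x \<noteq> 0" and y0: "y \<noteq> 0" and zp: "z > 0"
    and eq: "z^2 = x^4 + 9*x^2*y^2 + 27*y^4"
  shows "\<exists>m n N. coprime m n \<and> n \<noteq> 0 \<and> N^2 = m^4 - 18*m^2*n^2 - 27*n^4 \<and> m^4 < 4*z"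
proof (cases "even y")
  case False
  define P where "P = 2*x^2 + 9*y^2"
  define A where "A = 2*z + P"
  define A' where "A' = 2*z - P"
  have nx3: "\<not> 3 dvd x" using three_not_dvd_x[OF cop eq] .
  have AA': "A*A' = 27*y^4" unfolding A_def A'_def P_def using eq by algebra
  have y2: "y^2 > 0" using y0 by simp
  have "x^2 \<ge> 0" by simp
  then have Pp: "P > 0" unfolding P_def using y2 by linarith
  have Ap: "A > 0" unfolding A_def using Pp zp by linarith
  have "27*y^4 > 0" using y0 by simp
  then have "A*A' > 0" using AA' by simp
  then have A'p: "A' > 0" using Ap zero_less_mult_pos by blast
  have oddA: "odd A" unfolding A_def P_def using False by simp
  have copA: "coprime A A'"
  proof (rule coprime_by_primes)
    fix p :: int assume p: "prime p" "p dvd A" "p dvd A'"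
    have p1: "p > 1" using p prime_gt_1_int by blast
    have p2: "p \<noteq> 2" using p oddA by auto
    have "p dvd A - A'" using p by simp
    moreover have "A - A' = 2*P" unfolding A_def A'_def by simp
    ultimately have "p dvd 2*P" by simp
    then have "p dvd 2 \<or> p dvd P" by (rule prime_dvd_multD[OF p(1)])
    moreover have "\<not> p dvd 2"
    proof
      assume "p dvd 2" then have "p \<le> 2" using zdvd_imp_le by simp
      then show False using p1 p2 by simp
    qed
    ultimately have pP: "p dvd P" by simp
    have "p dvd A*A'" using p by simp
    then have "p dvd 27*y^4" using AA' by simp
    then have "p dvd 27 \<or> p dvd y^4" by (rule prime_dvd_multD[OF p(1)])
    then show False
    proof
      assume "p dvd 27" then have "p = 3" using prime_dvd_3 p by blast
      then have "3 dvd 2*x^2 + 9*y^2" using pP P_def by simp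
      then have "3 dvd 2*x^2 + 9*y^2 - 3*(3*y^2)" by (rule dvd_diff) simp
      then have "3 dvd 2*x^2" by simp
      then have "(3::int) dvd 2 \<or> 3 dvd x^2" by (rule prime_dvd_multD[OF prime3_int])
      then have "3 dvd x^2" by simp
      then have "3 dvd x" by (rule prime_dvd_power[OF prime3_int])
      then show False using nx3 by blast
    next
      assume "p dvd y^4" then have py: "p dvd y" by (rule prime_dvd_power[OF p(1)])
      then have "p dvd 9*y*y" by simp
      with pP have "p dvd P - 9*y*y" by (rule dvd_diff)
      moreover have "P - 9*y*y = 2*x^2" unfolding P_def by (simp add: power2_eq_square)
      ultimately have "p dvd 2*x^2" by simp
      then have "p dvd 2 \<or> p dvd x^2" by (rule prime_dvd_multD[OF p(1)])
      then have "p dvd x^2" using \<open>\<not> p dvd 2\<close> by blast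
      then have "p dvd x" by (rule prime_dvd_power[OF p(1)])
      then have "is_unit p" using coprime_common_divisor[OF cop _ py] by blast
      then show False using p(1) not_prime_unit by blast
    qed
  qed
  obtain a b where ab: "(A = a^4 \<and> A' = 27*b^4) \<or> (A = 27*a^4 \<and> A' = b^4)"
    using L_int[OF copA AA' Ap A'p] by blast
  then show ?thesis
  proof
    assume h: "A = a^4 \<and> A' = 27*b^4"
    have "27*y^4 = 27*(a*b)^4" using AA' h by (simp add: power_mult_distrib)
    then have "\<bar>y\<bar>^4 = \<bar>a*b\<bar>^4" by simp
    then have "\<bar>y\<bar> = \<bar>a*b\<bar>" by (rule power_eq_imp_eq_base) simp_all
    then have yab: "y^2 = a^2*b^2" by (metis power2_abs power_mult_distrib)
    have "(2*x)^2 = a^4 - 18*a^2*b^2 - 27*b^4"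
      using h yab unfolding A_def A'_def P_def by algebra
    moreover have "coprime a b" using copA h by simp
    moreover have "b \<noteq> 0" using h A'p by auto
    moreover have "A + A' = 4*z" unfolding A_def A'_def by simp
    then have "a^4 < 4*z" using h A'p by linarith
    ultimately show ?thesis by blast
  next
    assume h: "A = 27*a^4 \<and> A' = b^4"
    have "27*y^4 = 27*(a*b)^4" using AA' h by (simp add: power_mult_distrib)
    then have "\<bar>y\<bar>^4 = \<bar>a*b\<bar>^4" by simp
    then have "\<bar>y\<bar> = \<bar>a*b\<bar>" by (rule power_eq_imp_eq_base) simp_all
    then have yab: "y^2 = a^2*b^2" by (metis power2_abs power_mult_distrib)
    have "x^2 + b^4 = 3*(9*a^4 - 6*a^2*b^2 - x^2)"
      using h yab unfolding A_def A'_def P_def by algebra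
    then have "3 dvd x^2 + b^4" by (metis dvd_triv_left)
    then show ?thesis using mod3_lemma nx3 by blast
  qed
next
  case True
  then obtain w where w: "y = 2*w" by blast
  have w0: "w \<noteq> 0" using w y0 by simp
  have nx3: "\<not> 3 dvd x" using three_not_dvd_x[OF cop eq] .
  have ox: "odd x" using True coprime_common_divisor[OF cop, of 2] by auto
  have oz: "odd z" using z_odd[OF cop eq] .
  have "even (z + x^2)" using ox oz by simp
  then obtain k where k: "z + x^2 = 2*k" by blast
  define B where "B = k + 9*w^2"
  define B' where "B' = k - x^2 - 9*w^2"
  have zk: "z = 2*k - x^2" using k by simp
  have BB': "B*B' = 27*w^4"
  proof -
    have "4*(B*B') = 4*(27*w^4)" unfolding B_def B'_def using eq zk w by algebra
    then show ?thesis by linarith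
  qed
  have "x^2 \<ge> 0" by simp
  then have kp: "k > 0" using k zp by linarith
  have "w^2 \<ge> 0" by simp
  then have Bp: "B > 0" unfolding B_def using kp by linarith
  have "27*w^4 > 0" using w0 by simp
  then have "B*B' > 0" using BB' by simp
  then have B'p: "B' > 0" using Bp zero_less_mult_pos by blast
  have copB: "coprime B B'"
  proof (rule coprime_by_primes)
    fix p :: int assume p: "prime p" "p dvd B" "p dvd B'"
    have "p dvd B - B'" using p by simp
    moreover have "B - B' = x^2 + 18*w^2" unfolding B_def B'_def by simp
    ultimately have pP: "p dvd x^2 + 18*w^2" by simp
    have "p dvd B*B'" using p by simp
    then have "p dvd 27*w^4" using BB' by simp
    then have "p dvd 27 \<or> p dvd w^4" by (rule prime_dvd_multD[OF p(1)])
    then show False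
    proof
      assume "p dvd 27" then have "p = 3" using prime_dvd_3 p by blast
      then have "3 dvd x^2 + 18*w^2" using pP by simp
      then have "3 dvd x^2 + 18*w^2 - 3*(6*w^2)" by (rule dvd_diff) simp
      then have "3 dvd x^2 + 0^4" by simp
      then show False using mod3_lemma nx3 by blast
    next
      assume "p dvd w^4" then have pw: "p dvd w" by (rule prime_dvd_power[OF p(1)])
      then have "p dvd 18*w*w" by simp
      with pP have "p dvd x^2 + 18*w^2 - 18*w*w" by (rule dvd_diff)
      moreover have "x^2 + 18*w^2 - 18*w*w = x^2" by (simp add: power2_eq_square)
      ultimately have "p dvd x^2" by simp
      then have "p dvd x" by (rule prime_dvd_power[OF p(1)])
      moreover have "p dvd y" using pw w by simp
      ultimately have "is_unit p" using coprime_common_divisor[OF cop] by blast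
      then show False using p(1) not_prime_unit by blast
    qed
  qed
  obtain a b where ab: "(B = a^4 \<and> B' = 27*b^4) \<or> (B = 27*a^4 \<and> B' = b^4)"
    using L_int[OF copB BB' Bp B'p] by blast
  then show ?thesis
  proof
    assume h: "B = a^4 \<and> B' = 27*b^4"
    have "27*w^4 = 27*(a*b)^4" using BB' h by (simp add: power_mult_distrib)
    then have "\<bar>w\<bar>^4 = \<bar>a*b\<bar>^4" by simp
    then have "\<bar>w\<bar> = \<bar>a*b\<bar>" by (rule power_eq_imp_eq_base) simp_all
    then have wab: "w^2 = a^2*b^2" by (metis power2_abs power_mult_distrib)
    have "x^2 = a^4 - 18*a^2*b^2 - 27*b^4"
      using h wab unfolding B_def B'_def by algebra
    moreover have "coprime a b" using copB h by simp
    moreover have "b \<noteq> 0" using h B'p by auto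
    moreover have "B + B' = z" unfolding B_def B'_def zk by simp
    then have "a^4 < 4*z" using h B'p zp by linarith
    ultimately show ?thesis by blast
  next
    assume h: "B = 27*a^4 \<and> B' = b^4"
    have "27*w^4 = 27*(a*b)^4" using BB' h by (simp add: power_mult_distrib)
    then have "\<bar>w\<bar>^4 = \<bar>a*b\<bar>^4" by simp
    then have "\<bar>w\<bar> = \<bar>a*b\<bar>" by (rule power_eq_imp_eq_base) simp_all
    then have wab: "w^2 = a^2*b^2" by (metis power2_abs power_mult_distrib)
    have "x^2 + b^4 = 3*(9*a^4 - 6*a^2*b^2)"
      using h wab unfolding B_def B'_def by algebra
    then have "3 dvd x^2 + b^4" by (metis dvd_triv_left)
    then show ?thesis using mod3_lemma nx3 by blast
  qed
qed

lemma step2: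
  fixes m n N :: int
  assumes cop: "coprime m n" and n0: "n \<noteq> 0" and hN: "N^2 = m^4 - 18*m^2*n^2 - 27*n^4"
  shows "\<exists>a b. coprime a b \<and> a \<noteq> 0 \<and> b \<noteq> 0 \<and> m^2 = a^4 + 9*a^2*b^2 + 27*b^4"
proof -
  define S where "S = m^2 - 9*n^2"
  have hS: "N^2 = S^2 - 108*n^4" unfolding S_def using hN by algebra
  have n4: "n^4 > 0" using n0 by simp
  have n2: "n^2 > 0" using n0 by simp
  have "N^2 \<ge> 0" by simp
  moreover have "m^2*m^2 = N^2 + 18*n^2*m^2 + 27*n^4" using hN by algebra
  ultimately have ge: "m^2*m^2 \<ge> 18*n^2*m^2 + 27*n^4" by linarith
  have m0: "m \<noteq> 0"
  proof
    assume "m = 0" then show False using ge n4 by simp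
  qed
  have m2: "m^2 > 0" using m0 by simp
  have "m^2*m^2 > (18*n^2)*m^2" using ge n4 by linarith
  then have "m^2 > 18*n^2" using m2 mult_less_cancel_right_pos[of "m^2" "18*n^2" "m^2"] by linarith
  then have Sp: "S > 0" unfolding S_def using n2 by linarith
  have "(S+N)*(S-N) = 2*(54*n^4)" using hS by algebra
  then have "even ((S+N)*(S-N))" by simp
  then have "even (S+N) \<or> even (S-N)" by simp
  moreover have "even (S+N)" if "even (S-N)"
  proof -
    have "S + N = (S - N) + 2*N" by simp
    then show ?thesis using that by (metis dvd_add dvd_triv_left)
  qed
  ultimately have "even (S+N)" by blast
  then obtain D where D: "S + N = 2*D" by blast
  define D' where "D' = S - D"
  have DD': "D*D' = 27*n^4"
  proof -
    have "4*(D*D') = 4*(27*n^4)" unfolding D'_def using D hS by algebra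
    then show ?thesis by linarith
  qed
  have sum: "D + D' = S" unfolding D'_def by simp
  have "D*D' > 0" using DD' n4 by simp
  then have "(D > 0 \<and> D' > 0) \<or> (D < 0 \<and> D' < 0)" by (simp add: zero_less_mult_iff)
  then have Dp: "D > 0" and D'p: "D' > 0" using sum Sp by auto
  have copD: "coprime D D'"
  proof (rule coprime_by_primes)
    fix p :: int assume p: "prime p" "p dvd D" "p dvd D'"
    have pS: "p dvd m^2 - 9*n^2" using p sum S_def by (metis dvd_add)
    have "p dvd D*D'" using p by simp
    then have "p dvd 27*n^4" using DD' by simp
    then have "p dvd 27 \<or> p dvd n^4" by (rule prime_dvd_multD[OF p(1)])
    then show False
    proof
      assume "p dvd n^4" then have pn: "p dvd n" by (rule prime_dvd_power[OF p(1)])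
      then have "p dvd 9*n*n" by simp
      then have "p dvd (m^2 - 9*n^2) + 9*n*n" using pS by (rule dvd_add[rotated])
      moreover have "(m^2 - 9*n^2) + 9*n*n = m^2" by (simp add: power2_eq_square)
      ultimately have "p dvd m^2" by simp
      then have "p dvd m" by (rule prime_dvd_power[OF p(1)])
      then have "is_unit p" using coprime_common_divisor[OF cop _ pn] by blast
      then show False using p(1) not_prime_unit by blast
    next
      assume "p dvd 27" then have p3: "p = 3" using prime_dvd_3 p by blast
      then have "3 dvd m^2 - 9*n^2" using pS by simp
      then have "3 dvd (m^2 - 9*n^2) + 3*(3*n^2)" by (rule dvd_add) simp
      then have "3 dvd m^2" by simp
      then have "3 dvd m" by (rule prime_dvd_power[OF prime3_int])
      then obtain m1 where m1: "m = 3*m1" by blast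
      have n3: "\<not> 3 dvd n" using coprime_common_divisor[OF cop \<open>3 dvd m\<close>] by auto
      have n43: "\<not> 3 dvd n^4"
      proof
        assume "3 dvd n^4" then have "3 dvd n" by (rule prime_dvd_power[OF prime3_int])
        then show False using n3 by simp
      qed
      obtain D1 where D1: "D = 3*D1" using p p3 by blast
      obtain E1 where E1: "D' = 3*E1" using p p3 by blast
      have "9*(D1*E1) = 9*(3*n^4)" using DD' D1 E1 by simp
      then have DE1: "D1*E1 = 3*n^4" by simp
      have S9: "3*D1 + 3*E1 = 9*(m1^2 - n^2)" using sum D1 E1 m1 S_def by (simp add: power_mult_distrib)
      then have SE: "D1 + E1 = 3*(m1^2 - n^2)" by simp
      have "3 dvd D1*E1" using DE1 by simp
      then have "3 dvd D1 \<or> 3 dvd E1" by (rule prime_dvd_multD[OF prime3_int])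
      then show False
      proof
        assume "3 dvd D1"
        then obtain D2 where D2: "D1 = 3*D2" by blast
        have "E1 = 3*(m1^2 - n^2 - D2)" using SE D2 by simp
        then obtain E2 where E2: "E1 = 3*E2" by blast
        have "9*(D2*E2) = 3*n^4" using DE1 D2 E2 by simp
        then have "n^4 = 3*(D2*E2)" by simp
        then show False using n43 by simp
      next
        assume "3 dvd E1"
        then obtain E2 where E2: "E1 = 3*E2" by blast
        have "D1 = 3*(m1^2 - n^2 - E2)" using SE E2 by simp
        then obtain D2 where D2: "D1 = 3*D2" by blast
        have "9*(D2*E2) = 3*n^4" using DE1 D2 E2 by simp
        then have "n^4 = 3*(D2*E2)" by simp
        then show False using n43 by simp
      qed
    qed
  qed
  obtain a b where ab: "(D = a^4 \<and> D' = 27*b^4) \<or> (D = 27*a^4 \<and> D' = b^4)"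
    using L_int[OF copD DD' Dp D'p] by blast
  have "27*n^4 = 27*(a*b)^4" using DD' ab by (auto simp: power_mult_distrib)
  then have "\<bar>n\<bar>^4 = \<bar>a*b\<bar>^4" by simp
  then have "\<bar>n\<bar> = \<bar>a*b\<bar>" by (rule power_eq_imp_eq_base) simp_all
  then have nab: "n^2 = a^2*b^2" by (metis power2_abs power_mult_distrib)
  from ab show ?thesis
  proof
    assume h: "D = a^4 \<and> D' = 27*b^4"
    have "m^2 = a^4 + 9*a^2*b^2 + 27*b^4" using h nab sum S_def by algebra
    moreover have "coprime a b" using copD h by simp
    moreover have "a \<noteq> 0" "b \<noteq> 0" using h Dp D'p by auto
    ultimately show ?thesis by blast
  next
    assume h: "D = 27*a^4 \<and> D' = b^4"
    have "m^2 = b^4 + 9*b^2*a^2 + 27*a^4" using h nab sum S_def by algebra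
    moreover have "coprime b a" using copD h by (simp add: coprime_commute)
    moreover have "a \<noteq> 0" "b \<noteq> 0" using h Dp D'p by auto
    ultimately show ?thesis by blast
  qed
qed

lemma descent:
  "\<forall>x y z :: int. nat z = k \<longrightarrow> coprime x y \<longrightarrow> x \<noteq> 0 \<longrightarrow> y \<noteq> 0 \<longrightarrow> z > 0 \<longrightarrow>
     z^2 = x^4 + 9*x^2*y^2 + 27*y^4 \<longrightarrow> False"
proof (induction k rule: less_induct)
  case (less k)
  show ?case
  proof (intro allI impI)
    fix x y z :: int
    assume k: "nat z = k" and cop: "coprime x y" and x0: "x \<noteq> 0" and y0: "y \<noteq> 0"
      and zp: "z > 0" and eq: "z^2 = x^4 + 9*x^2*y^2 + 27*y^4"
    obtain m n N where mn: "coprime m n" "n \<noteq> 0" "N^2 = m^4 - 18*m^2*n^2 - 27*n^4" "m^4 < 4*z"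
      using step1[OF cop x0 y0 zp eq] by blast
    obtain a b where ab: "coprime a b" "a \<noteq> 0" "b \<noteq> 0" "m^2 = a^4 + 9*a^2*b^2 + 27*b^4"
      using step2[OF mn(1,2,3)] by blast
    have "y^4 > 0" using y0 by simp
    moreover have "x^4 \<ge> 0" "x^2*y^2 \<ge> 0" by simp_all
    ultimately have "z^2 > 4" using eq by linarith
    have z2: "z \<ge> 2"
    proof (rule ccontr)
      assume "\<not> z \<ge> 2" then have "z \<le> 1" by simp
      then have "z^2 \<le> 1^2" using zp by (intro power_mono) simp_all
      then show False using \<open>z^2 > 4\<close> by simp
    qed
    have "b^4 > 0" using ab by simp
    moreover have "a^4 \<ge> 0" "a^2*b^2 \<ge> 0" by simp_all
    ultimately have "m^2 > 0" using ab(4) by linarith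
    then have m0: "m \<noteq> 0" by auto
    have lt: "\<bar>m\<bar> < z"
    proof (rule ccontr)
      assume "\<not> \<bar>m\<bar> < z"
      then have "z \<le> \<bar>m\<bar>" by simp
      then have "z^4 \<le> \<bar>m\<bar>^4" using zp by (intro power_mono) simp_all
      then have "z^4 \<le> m^4" by simp
      moreover have "2^3 \<le> z^3" using z2 by (intro power_mono) simp_all
      then have "z * 8 \<le> z * z^3" using zp by simp
      then have "8*z \<le> z^4" by (simp add: power_numeral_reduce mult.commute)
      ultimately show False using mn(4) zp by linarith
    qed
    have "nat \<bar>m\<bar> < k" using lt k m0 by simp
    moreover have "\<bar>m\<bar>^2 = a^4 + 9*a^2*b^2 + 27*b^4" using ab(4) by simp
    moreover have "\<bar>m\<bar> > 0" using m0 by simp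
    ultimately show False using less.IH[of "nat \<bar>m\<bar>", rule_format, where x=a and y=b and z="\<bar>m\<bar>"] ab by blast
  qed
qed

theorem mainTheorem2:
  shows "\<not> (\<exists>x y z :: int. x \<noteq> 0 \<and> y \<noteq> 0 \<and> z \<noteq> 0 \<and>
           x ^ 4 + 9 * x ^ 2 * y ^ 2 + 27 * y ^ 4 = z ^ 2)"
proof
  assume "\<exists>x y z :: int. x \<noteq> 0 \<and> y \<noteq> 0 \<and> z \<noteq> 0 \<and>
           x ^ 4 + 9 * x ^ 2 * y ^ 2 + 27 * y ^ 4 = z ^ 2"
  then obtain x y z :: int where x0: "x \<noteq> 0" and y0: "y \<noteq> 0" and z0: "z \<noteq> 0"
    and eq: "x ^ 4 + 9 * x ^ 2 * y ^ 2 + 27 * y ^ 4 = z ^ 2" by blast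
  define d where "d = gcd x y"
  have d0: "d \<noteq> 0" using x0 d_def by simp
  define x1 where "x1 = x div d"
  define y1 where "y1 = y div d"
  have x: "x = x1 * d" unfolding x1_def d_def by simp
  have y: "y = y1 * d" unfolding y1_def d_def by simp
  have cop: "coprime x1 y1"
  proof (rule gcd_coprime)
    show "gcd x y \<noteq> 0" using d0 unfolding d_def .
    show "x = x1 * gcd x y" unfolding d_def[symmetric] by (rule x)
    show "y = y1 * gcd x y" unfolding d_def[symmetric] by (rule y)
  qed
  have ez: "z^2 = d^4 * (x1^4 + 9*x1^2*y1^2 + 27*y1^4)" using eq unfolding x y
    by (simp add: power_mult_distrib algebra_simps)
  then have "(d^2)^2 dvd z^2" by (simp add: power_mult[symmetric])
  then have "d^2 dvd z" using pow_divides_pow_iff[of 2 "d^2" z] by simp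
  then obtain z1 where z1: "z = d^2 * z1" by blast
  have "d^4 * z1^2 = d^4 * (x1^4 + 9*x1^2*y1^2 + 27*y1^4)" using ez unfolding z1
    by (simp add: power_mult_distrib flip: power_mult)
  then have e1: "z1^2 = x1^4 + 9*x1^2*y1^2 + 27*y1^4" using d0 by simp
  have "x1 \<noteq> 0" "y1 \<noteq> 0" "z1 \<noteq> 0" using x y z1 x0 y0 z0 by auto
  moreover have "\<bar>z1\<bar>^2 = x1^4 + 9*x1^2*y1^2 + 27*y1^4" using e1 by simp
  moreover have "\<bar>z1\<bar> > 0" using \<open>z1 \<noteq> 0\<close> by simp
  ultimately show False using descent[of "nat \<bar>z1\<bar>", rule_format, where x=x1 and y=y1 and z="\<bar>z1\<bar>"] cop by blast
qed

end
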